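(* Let $R$ be a ring, $M$ a nonzero left $R$-module, $\Omega$ an infinite set, $N$ either $\bigoplus_{i\in\Omega} M$ or $\prod_{i\in\Omega} M$, and $E=\mathrm{End}_R(N)$. Suppose that $U\subseteq E$ is a subset for which there exists a moiety $\Sigma\subseteq\Omega$ that is full with respect to $U$. Then there exist elements $x,y\in E$ such that $$E = yUy + yUyx + xyUy + xyUyx,$$ that is, every $f\in E$ can be written as $f = y u_1 y + y u_2 y x + x y u_3 y + x y u_4 y x$ for some $u_1,u_2,u_3,u_4\in U$.
   Context: Rings are unital and associative. Endomorphisms are written on the right of their arguments, so the product $fg$ in $E$ means "first $f$, then $g$". For $\Sigma\subseteq\Omega$, $M^{\Sigma}$ denotes the $R$-submodule of $N$ consisting of elements supported on the coordinates in $\Sigma$ (so $N = M^{\Sigma}\oplus M^{\Omega\setminus\Sigma}$). For $U\subseteq E$, let $U_{\{\Sigma\}}=\{f\in U : M^{\Sigma}f\subseteq M^{\Sigma},\ M^{\Omega\setminus\Sigma}f\subseteq M^{\Omega\setminus\Sigma}\}$. A subset $\Sigma\subseteq\Omega$ is called full with respect to $U\subseteq E$ if every $R$-endomorphism of $M^{\Sigma}$ is the restriction to $M^{\Sigma}$ of some member of $U_{\{\Sigma\}}$. A subset $\Sigma\subseteq\Omega$ is a moiety if $|\Sigma|=|\Omega|=|\Omega\setminus\Sigma|$. For subsets $A,B\subseteq E$, $A+B=\{a+b : a\in A, b\in B\}$ and $yAy=\{yay : a\in A\}$, etc. *)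

theory Defs
  imports "HOL-Library.Equipollence"
begin

definition left_module :: "('r::ring_1 \<Rightarrow> 'm::ab_group_add \<Rightarrow> 'm) \<Rightarrow> bool" where
  "left_module s \<longleftrightarrow>
     (\<forall>r a b. s r (a + b) = s r a + s r b) \<and>
     (\<forall>r t a. s (r + t) a = s r a + s t a) \<and>
     (\<forall>r t a. s (r * t) a = s r (s t a)) \<and>
     (\<forall>a. s 1 a = a)"

definition prod_mod :: "'i set \<Rightarrow> ('i \<Rightarrow> 'm::zero) set" where
  "prod_mod \<Omega> = {v. \<forall>i. i \<notin> \<Omega> \<longrightarrow> v i = 0}"

definition dsum_mod :: "'i set \<Rightarrow> ('i \<Rightarrow> 'm::zero) set" where
  "dsum_mod \<Omega> = {v \<in> prod_mod \<Omega>. finite {i. v i \<noteq> 0}}"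

definition supp_sub :: "('i \<Rightarrow> 'm::zero) set \<Rightarrow> 'i set \<Rightarrow> ('i \<Rightarrow> 'm) set" where
  "supp_sub N \<Sigma> = {v \<in> N. \<forall>i. i \<notin> \<Sigma> \<longrightarrow> v i = 0}"

definition is_endo :: "('r \<Rightarrow> 'm::ab_group_add \<Rightarrow> 'm) \<Rightarrow> ('i \<Rightarrow> 'm) set
    \<Rightarrow> (('i \<Rightarrow> 'm) \<Rightarrow> ('i \<Rightarrow> 'm)) \<Rightarrow> bool" where
  "is_endo s S f \<longleftrightarrow>
     (\<forall>v\<in>S. f v \<in> S) \<and>
     (\<forall>v\<in>S. \<forall>w\<in>S. f (\<lambda>i. v i + w i) = (\<lambda>i. f v i + f w i)) \<and>
     (\<forall>r. \<forall>v\<in>S. f (\<lambda>i. s r (v i)) = (\<lambda>i. s r (f v i)))"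

text \<open>E = End_R(N), as extensional functions (value 0 outside N).\<close>
definition End :: "('r \<Rightarrow> 'm::ab_group_add \<Rightarrow> 'm) \<Rightarrow> ('i \<Rightarrow> 'm) set
    \<Rightarrow> (('i \<Rightarrow> 'm) \<Rightarrow> ('i \<Rightarrow> 'm)) set" where
  "End s N = {f. is_endo s N f \<and> (\<forall>v. v \<notin> N \<longrightarrow> f v = (\<lambda>i. 0))}"

definition stab :: "(('i \<Rightarrow> 'm::zero) \<Rightarrow> ('i \<Rightarrow> 'm)) set \<Rightarrow> ('i \<Rightarrow> 'm) set \<Rightarrow> 'i set \<Rightarrow> 'i set
    \<Rightarrow> (('i \<Rightarrow> 'm) \<Rightarrow> ('i \<Rightarrow> 'm)) set" where
  "stab U N \<Omega> \<Sigma> = {f \<in> U. f ` supp_sub N \<Sigma> \<subseteq> supp_sub N \<Sigma> \<and>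
                         f ` supp_sub N (\<Omega> - \<Sigma>) \<subseteq> supp_sub N (\<Omega> - \<Sigma>)}"

definition full :: "('r \<Rightarrow> 'm::ab_group_add \<Rightarrow> 'm) \<Rightarrow> ('i \<Rightarrow> 'm) set \<Rightarrow> 'i set
    \<Rightarrow> (('i \<Rightarrow> 'm) \<Rightarrow> ('i \<Rightarrow> 'm)) set \<Rightarrow> 'i set \<Rightarrow> bool" where
  "full s N \<Omega> U \<Sigma> \<longleftrightarrow>
     (\<forall>g. is_endo s (supp_sub N \<Sigma>) g \<longrightarrow>
        (\<exists>f\<in>stab U N \<Omega> \<Sigma>. \<forall>v\<in>supp_sub N \<Sigma>. f v = g v))"

definition moiety :: "'i set \<Rightarrow> 'i set \<Rightarrow> bool" where
  "moiety \<Omega> \<Sigma> \<longleftrightarrow> \<Sigma> \<subseteq> \<Omega> \<and> \<Sigma> \<approx> \<Omega> \<and> (\<Omega> - \<Sigma>) \<approx> \<Omega>"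

end

theory Submission
  imports Defs
begin

definition proj :: "('i \<Rightarrow> 'm::zero) set \<Rightarrow> 'i set \<Rightarrow> ('i \<Rightarrow> 'm) \<Rightarrow> ('i \<Rightarrow> 'm)" where
  "proj N A v = (if v \<in> N then (\<lambda>i. if i \<in> A then v i else 0) else (\<lambda>i. 0))"

definition perm :: "('i \<Rightarrow> 'm::zero) set \<Rightarrow> ('i \<Rightarrow> 'i) \<Rightarrow> ('i \<Rightarrow> 'm) \<Rightarrow> ('i \<Rightarrow> 'm)" where
  "perm N t v = (if v \<in> N then (\<lambda>i. v (t i)) else (\<lambda>i. 0))"

lemma smul_zero:
  assumes "left_module s" shows "s r 0 = 0"
proof -
  have "s r (0 + 0) = s r 0 + s r 0" using assms unfolding left_module_def by blast
  then show ?thesis by simp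
qed

lemma N_zero: "N = prod_mod \<Omega> \<or> N = dsum_mod \<Omega> \<Longrightarrow> (\<lambda>i. 0) \<in> N"
  by (auto simp: prod_mod_def dsum_mod_def)

lemma N_add:
  fixes v w :: "'i \<Rightarrow> 'm::ab_group_add"
  assumes "N = prod_mod \<Omega> \<or> N = dsum_mod \<Omega>" "v \<in> N" "w \<in> N"
  shows "(\<lambda>i. v i + w i) \<in> N"
proof -
  have sub: "{i. v i + w i \<noteq> 0} \<subseteq> {i. v i \<noteq> 0} \<union> {i. w i \<noteq> 0}" by auto
  have p: "(\<lambda>i. v i + w i) \<in> prod_mod \<Omega>" if "v \<in> prod_mod \<Omega>" "w \<in> prod_mod \<Omega>"
    using that by (simp add: prod_mod_def)
  show ?thesis using assms(1)
  proof
    assume "N = prod_mod \<Omega>" then show ?thesis using p assms(2,3) by simp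
  next
    assume N: "N = dsum_mod \<Omega>"
    then have "finite {i. v i \<noteq> 0}" "finite {i. w i \<noteq> 0}" using assms(2,3) by (auto simp: dsum_mod_def)
    then have "finite {i. v i + w i \<noteq> 0}" using sub by (meson finite_UnI finite_subset)
    then show ?thesis using N p assms(2,3) by (simp add: dsum_mod_def)
  qed
qed

lemma N_smul:
  assumes "left_module s" "N = prod_mod \<Omega> \<or> N = dsum_mod \<Omega>" "v \<in> N"
  shows "(\<lambda>i. s r (v i)) \<in> N"
proof -
  have z: "s r 0 = 0" using smul_zero[OF assms(1)] .
  have "{i. s r (v i) \<noteq> 0} \<subseteq> {i. v i \<noteq> 0}" using z by auto
  then show ?thesis using assms z
    by (auto simp: prod_mod_def dsum_mod_def intro: finite_subset)
qed

lemma N_proj: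
  assumes "N = prod_mod \<Omega> \<or> N = dsum_mod \<Omega>" "v \<in> N"
  shows "(\<lambda>i. if i \<in> A then v i else 0) \<in> N"
proof -
  have "{i. (if i \<in> A then v i else 0) \<noteq> 0} \<subseteq> {i. v i \<noteq> 0}" by auto
  then show ?thesis using assms
    by (auto simp: prod_mod_def dsum_mod_def intro: finite_subset)
qed

lemma N_perm:
  assumes "N = prod_mod \<Omega> \<or> N = dsum_mod \<Omega>" "v \<in> N"
    and "\<And>i. t (t i) = i" "\<And>i. i \<notin> \<Omega> \<Longrightarrow> t i = i"
  shows "(\<lambda>i. v (t i)) \<in> N"
proof -
  have "{i. v (t i) \<noteq> 0} \<subseteq> t ` {i. v i \<noteq> 0}"
    using assms(3) by (auto intro!: image_eqI[where x="t _"])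
  moreover have "\<And>i. i \<notin> \<Omega> \<Longrightarrow> v (t i) = 0" using assms
    by (auto simp: prod_mod_def dsum_mod_def)
  ultimately show ?thesis using assms(1,2)
    by (auto simp: prod_mod_def dsum_mod_def intro: finite_subset)
qed

lemma End_zero:
  assumes "f \<in> End s N" "(\<lambda>i. 0) \<in> N"
  shows "f (\<lambda>i. 0) = (\<lambda>i. 0)"
proof -
  have a: "\<forall>v\<in>N. \<forall>w\<in>N. f (\<lambda>i. v i + w i) = (\<lambda>i. f v i + f w i)"
    using assms(1) unfolding End_def is_endo_def by blast
  have "f (\<lambda>i. 0) = (\<lambda>i. f (\<lambda>i. 0) i + f (\<lambda>i. 0) i)"
    using a[rule_format, OF assms(2) assms(2)] by simp
  then have "\<And>i. f (\<lambda>i. 0) i = f (\<lambda>i. 0) i + f (\<lambda>i. 0) i" by (metis add_0)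
  then show ?thesis by (metis add_cancel_left_left ext)
qed

lemma End_comp:
  assumes "f \<in> End s N" "g \<in> End s N" "(\<lambda>i. 0) \<in> N"
  shows "(\<lambda>v. g (f v)) \<in> End s N"
proof -
  have fN: "\<And>v. v \<in> N \<Longrightarrow> f v \<in> N" using assms(1) by (auto simp: End_def is_endo_def)
  have gN: "\<And>v. v \<in> N \<Longrightarrow> g v \<in> N" using assms(2) by (auto simp: End_def is_endo_def)
  show ?thesis
    using assms fN gN End_zero[OF assms(2,3)]
    unfolding End_def is_endo_def by auto
qed

lemma endo_sub:
  assumes "f \<in> End s N" "S \<subseteq> N" "\<And>v. v \<in> S \<Longrightarrow> f v \<in> S"
  shows "is_endo s S f"
proof -
  have h: "is_endo s N f" using assms(1) by (simp add: End_def)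
  show ?thesis unfolding is_endo_def
  proof (intro conjI ballI allI)
    fix v assume "v \<in> S" then show "f v \<in> S" using assms(3) by blast
  next
    fix v w assume "v \<in> S" "w \<in> S" then show "f (\<lambda>i. v i + w i) = (\<lambda>i. f v i + f w i)"
      using h assms(2) unfolding is_endo_def by blast
  next
    fix r v assume "v \<in> S" then show "f (\<lambda>i. s r (v i)) = (\<lambda>i. s r (f v i))"
      using h assms(2) unfolding is_endo_def by blast
  qed
qed

lemma proj_End:
  assumes "left_module s" "N = prod_mod \<Omega> \<or> N = dsum_mod \<Omega>"
  shows "proj N A \<in> End s N"
proof -
  have z: "\<And>r. s r 0 = 0" using smul_zero[OF assms(1)] .
  show ?thesis
    unfolding End_def is_endo_def proj_def
    using N_proj[OF assms(2)] N_add[OF assms(2)] N_smul[OF assms] z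
    by (auto intro!: ext)
qed

lemma perm_End:
  assumes "left_module s" "N = prod_mod \<Omega> \<or> N = dsum_mod \<Omega>"
    and "\<And>i. t (t i) = i" "\<And>i. i \<notin> \<Omega> \<Longrightarrow> t i = i"
  shows "perm N t \<in> End s N"
  unfolding End_def is_endo_def perm_def
  using N_perm[OF assms(2) _ assms(3,4)] N_add[OF assms(2)] N_smul[OF assms(1,2)]
  by (auto intro!: ext)

theorem lemma1:
  fixes s :: "'r::ring_1 \<Rightarrow> 'm::ab_group_add \<Rightarrow> 'm"
    and \<Omega> :: "'i set"
    and N :: "('i \<Rightarrow> 'm) set"
    and U :: "(('i \<Rightarrow> 'm) \<Rightarrow> ('i \<Rightarrow> 'm)) set"
  assumes "left_module s"
    and "\<exists>m::'m. m \<noteq> 0"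
    and "infinite \<Omega>"
    and "N = prod_mod \<Omega> \<or> N = dsum_mod \<Omega>"
    and "U \<subseteq> End s N"
    and "\<exists>\<Sigma>. moiety \<Omega> \<Sigma> \<and> full s N \<Omega> U \<Sigma>"
  shows "\<exists>x\<in>End s N. \<exists>y\<in>End s N. \<forall>f\<in>End s N.
           \<exists>u1\<in>U. \<exists>u2\<in>U. \<exists>u3\<in>U. \<exists>u4\<in>U. \<forall>v.
             f v = (\<lambda>i. y (u1 (y v)) i + x (y (u2 (y v))) i
                        + y (u3 (y (x v))) i + x (y (u4 (y (x v)))) i)"
proof -
  note lm = assms(1) and NN = assms(4)
  obtain \<Sigma> where moi: "moiety \<Omega> \<Sigma>" and fu: "full s N \<Omega> U \<Sigma>" using assms(6) by blast
  have SO: "\<Sigma> \<subseteq> \<Omega>" and "\<Sigma> \<approx> \<Omega>" "\<Omega> - \<Sigma> \<approx> \<Omega>" using moi by (auto simp: moiety_def)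
  then have "\<Sigma> \<approx> \<Omega> - \<Sigma>" by (meson eqpoll_sym eqpoll_trans)
  then obtain h where h: "bij_betw h \<Sigma> (\<Omega> - \<Sigma>)" by (auto simp: eqpoll_def)
  define t where "t i = (if i \<in> \<Sigma> then h i else if i \<in> \<Omega> - \<Sigma> then inv_into \<Sigma> h i else i)" for i
  have t1: "t i \<in> \<Omega> - \<Sigma>" if "i \<in> \<Sigma>" for i
    using that h by (auto simp: t_def bij_betw_def)
  have t2: "t i \<in> \<Sigma>" if "i \<in> \<Omega> - \<Sigma>" for i
    using that h by (auto simp: t_def bij_betw_def inv_into_into)
  have tt: "t (t i) = i" for i
  proof (cases "i \<in> \<Sigma>")
    case True then show ?thesis using h t1[OF True] by (auto simp: t_def bij_betw_def)
  next
    case False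
    show ?thesis
    proof (cases "i \<in> \<Omega> - \<Sigma>")
      case True then show ?thesis using h t2[OF True] False
        by (auto simp: t_def bij_betw_def f_inv_into_f)
    qed (use False in \<open>auto simp: t_def\<close>)
  qed
  have tO: "t i = i" if "i \<notin> \<Omega>" for i using that SO by (auto simp: t_def)
  define y where "y = proj N \<Sigma>"
  define y' where "y' = proj N (\<Omega> - \<Sigma>)"
  define x where "x = perm N t"
  have yE: "y \<in> End s N" unfolding y_def by (rule proj_End[OF lm NN])
  have y'E: "y' \<in> End s N" unfolding y'_def by (rule proj_End[OF lm NN])
  have xE: "x \<in> End s N" unfolding x_def by (rule perm_End[OF lm NN tt tO])
  have z: "(\<lambda>i. 0) \<in> N" by (rule N_zero[OF NN])
  have Nz: "w i = 0" if "w \<in> N" "i \<notin> \<Omega>" for w i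
    using that NN by (auto simp: prod_mod_def dsum_mod_def)
  define S where "S = supp_sub N \<Sigma>"
  have SN: "S \<subseteq> N" by (auto simp: S_def supp_sub_def)
  have yS: "y w \<in> S" if "w \<in> N" for w
    using that N_proj[OF NN that, of \<Sigma>] by (auto simp: y_def proj_def S_def supp_sub_def)
  have xy'S: "x (y' w) \<in> S" if "w \<in> N" for w
  proof -
    have a: "y' w \<in> N" using that N_proj[OF NN that, of "\<Omega> - \<Sigma>"] by (simp add: y'_def proj_def)
    have "x (y' w) \<in> N" using N_perm[OF NN a tt tO] a by (simp add: x_def perm_def)
    moreover have "x (y' w) i = 0" if "i \<notin> \<Sigma>" for i
    proof (cases "i \<in> \<Omega>")
      case True
      then have "t i \<in> \<Sigma>" using t2 that by auto
      then show ?thesis using a \<open>w \<in> N\<close> by (simp add: x_def perm_def y'_def proj_def)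
    next
      case False
      then show ?thesis using a tO by (simp add: x_def perm_def y'_def proj_def Nz[OF \<open>w\<in>N\<close>])
    qed
    ultimately show ?thesis by (simp add: S_def supp_sub_def)
  qed
  have xx: "x (x w) = w" if "w \<in> N" for w
    using that N_perm[OF NN that tt tO] by (simp add: x_def perm_def tt)
  have xyx: "x (y (x w)) = y' w" if "w \<in> N" for w
  proof -
    have a: "x w \<in> N" using xE that by (auto simp: End_def is_endo_def)
    have b: "y (x w) \<in> N" using yS[OF a] SN by auto
    show ?thesis
    proof (rule ext)
      fix i
      show "x (y (x w)) i = y' w i"
      proof (cases "i \<in> \<Omega>")
        case True
        then have "(t i \<in> \<Sigma>) = (i \<in> \<Omega> - \<Sigma>)" using t1 t2 by auto
        then show ?thesis using a b that by (simp add: x_def y_def y'_def perm_def proj_def tt)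
      next
        case False
        then show ?thesis using a b that tO Nz[OF that False]
          by (simp add: x_def y_def y'_def perm_def proj_def)
      qed
    qed
  qed
  have y'y': "y' (y' w) = y' w" if "w \<in> N" for w
    using that N_proj[OF NN that, of "\<Omega> - \<Sigma>"] by (auto simp: y'_def proj_def)
  have yy: "y (y w) = y w" if "w \<in> N" for w
    using that N_proj[OF NN that] by (auto simp: y_def proj_def)
  have yfix: "y w = w" if "w \<in> S" for w
    using that by (auto simp: y_def proj_def S_def supp_sub_def)
  have split: "(\<lambda>i. y w i + y' w i) = w" if "w \<in> N" for w
    using that SO Nz[OF that] by (auto simp: y_def y'_def proj_def)
  have EN: "g w \<in> N" if "g \<in> End s N" "w \<in> N" for g w
    using that by (auto simp: End_def is_endo_def)
  have E0: "g w = (\<lambda>i. 0)" if "g \<in> End s N" "w \<notin> N" for g w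
    using that by (auto simp: End_def)
  have EC: "(\<lambda>v. g (f v)) \<in> End s N" if "f \<in> End s N" "g \<in> End s N" for f g
    using End_comp[OF that z] .
  have getu: "\<exists>u\<in>U. \<forall>v\<in>S. u v = g v" if "g \<in> End s N" "\<And>v. v \<in> S \<Longrightarrow> g v \<in> S" for g
  proof -
    have "is_endo s (supp_sub N \<Sigma>) g" using endo_sub[OF that(1) SN that(2)] by (simp add: S_def)
    then show ?thesis using fu unfolding full_def stab_def S_def by blast
  qed
  show ?thesis
  proof (rule bexI[OF _ xE], rule bexI[OF _ yE], rule ballI)
    fix f assume fE: "f \<in> End s N"
    define g1 where "g1 = (\<lambda>v. y (f v))"
    define g2 where "g2 = (\<lambda>v. x (y' (f v)))"
    define g3 where "g3 = (\<lambda>v. y (f (y' (x v))))"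
    define g4 where "g4 = (\<lambda>v. x (y' (f (y' (x v)))))"
    have "g1 \<in> End s N" unfolding g1_def using EC fE yE by blast
    moreover have "g1 v \<in> S" if "v \<in> S" for v using that SN yS EN[OF fE] by (auto simp: g1_def)
    ultimately obtain u1 where u1: "u1 \<in> U" "\<And>v. v \<in> S \<Longrightarrow> u1 v = g1 v" using getu by blast
    have "g2 \<in> End s N" unfolding g2_def using EC[OF EC[OF fE y'E] xE] by simp
    moreover have "g2 v \<in> S" if "v \<in> S" for v using that SN xy'S EN[OF fE] by (auto simp: g2_def)
    ultimately obtain u2 where u2: "u2 \<in> U" "\<And>v. v \<in> S \<Longrightarrow> u2 v = g2 v" using getu by blast
    have "g3 \<in> End s N" unfolding g3_def using EC[OF EC[OF EC[OF xE y'E] fE] yE] by simp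
    moreover have "g3 v \<in> S" if "v \<in> S" for v using that SN yS EN[OF fE] EN[OF y'E] EN[OF xE]
      by (auto simp: g3_def)
    ultimately obtain u3 where u3: "u3 \<in> U" "\<And>v. v \<in> S \<Longrightarrow> u3 v = g3 v" using getu by blast
    have "g4 \<in> End s N" unfolding g4_def using EC[OF EC[OF EC[OF EC[OF xE y'E] fE] y'E] xE] by simp
    moreover have "g4 v \<in> S" if "v \<in> S" for v using that SN xy'S EN[OF fE] EN[OF y'E] EN[OF xE]
      by (auto simp: g4_def)
    ultimately obtain u4 where u4: "u4 \<in> U" "\<And>v. v \<in> S \<Longrightarrow> u4 v = g4 v" using getu by blast
    show "\<exists>u1\<in>U. \<exists>u2\<in>U. \<exists>u3\<in>U. \<exists>u4\<in>U. \<forall>v.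
             f v = (\<lambda>i. y (u1 (y v)) i + x (y (u2 (y v))) i
                        + y (u3 (y (x v))) i + x (y (u4 (y (x v)))) i)"
    proof (rule bexI[OF _ u1(1)], rule bexI[OF _ u2(1)], rule bexI[OF _ u3(1)], rule bexI[OF _ u4(1)], rule allI)
      fix v
      show "f v = (\<lambda>i. y (u1 (y v)) i + x (y (u2 (y v))) i
                        + y (u3 (y (x v))) i + x (y (u4 (y (x v)))) i)"
      proof (cases "v \<in> N")
        case False
        have "y v = (\<lambda>i. 0)" "x v = (\<lambda>i. 0)" "f v = (\<lambda>i. 0)"
          using E0 False yE xE fE by auto
        moreover have "u (\<lambda>i. 0) = (\<lambda>i. 0)" if "u \<in> U" for u
          using End_zero[OF _ z] that assms(5) by blast
        moreover have "y (\<lambda>i. 0) = (\<lambda>i. 0)" "x (\<lambda>i. 0) = (\<lambda>i. 0)"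
          using End_zero[OF _ z] yE xE by auto
        ultimately show ?thesis using u1 u2 u3 u4 by simp
      next
        case True
        have yvS: "y v \<in> S" using yS[OF True] .
        have yxvS: "y (x v) \<in> S" using yS[OF EN[OF xE True]] .
        have yvN: "y v \<in> N" and y'vN: "y' v \<in> N" using EN[OF yE True] EN[OF y'E True] .
        have e1: "y (u1 (y v)) = y (f (y v))"
          using u1(2)[OF yvS] yy[OF EN[OF fE yvN]] by (simp add: g1_def)
        have e2: "x (y (u2 (y v))) = y' (f (y v))"
          using u2(2)[OF yvS] yfix[OF xy'S[OF EN[OF fE yvN]]]
            xx[OF EN[OF y'E EN[OF fE yvN]]] by (simp add: g2_def)
        have e3: "y (u3 (y (x v))) = y (f (y' v))"
        proof -
          have "y' (x (y (x v))) = y' v" using xyx[OF True] y'y'[OF True] by simp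
          then show ?thesis
            using u3(2)[OF yxvS] yy[OF EN[OF fE EN[OF y'E EN[OF xE EN[OF yE EN[OF xE True]]]]]]
            by (simp add: g3_def)
        qed
        have e4: "x (y (u4 (y (x v)))) = y' (f (y' v))"
        proof -
          have "y' (x (y (x v))) = y' v" using xyx[OF True] y'y'[OF True] by simp
          then show ?thesis
            using u4(2)[OF yxvS]
              yfix[OF xy'S[OF EN[OF fE y'vN]]] xx[OF EN[OF y'E EN[OF fE y'vN]]]
            by (simp add: g4_def)
        qed
        have add: "f v = (\<lambda>i. f (y v) i + f (y' v) i)"
        proof -
          have "f v = f (\<lambda>i. y v i + y' v i)" using split[OF True] by simp
          also have "\<dots> = (\<lambda>i. f (y v) i + f (y' v) i)"
            using fE yvN y'vN unfolding End_def is_endo_def by blast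
          finally show ?thesis .
        qed
        have sp1: "f (y v) = (\<lambda>i. y (f (y v)) i + y' (f (y v)) i)"
          using split[OF EN[OF fE yvN]] by simp
        have sp2: "f (y' v) = (\<lambda>i. y (f (y' v)) i + y' (f (y' v)) i)"
          using split[OF EN[OF fE y'vN]] by simp
        show ?thesis
          unfolding e1 e2 e3 e4
          apply (subst add)
          apply (subst sp1)
          apply (subst sp2)
          by (simp add: algebra_simps)
      qed
    qed
  qed
qed

end
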